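(* Let $\mu\in\mathcal{L}$. Then $F_\mu$ is injective on $\mathbb{C}^+$ if and only if $\eta_{W(\mu)}$ is injective on the open unit disc $\mathbb{D}$.
   Context: For a probability measure $\mu$ on $\mathbb{R}$, $G_\mu(z)=\int\frac{d\mu(x)}{z-x}$ and $F_\mu=1/G_\mu$ on the upper half-plane $\mathbb{C}^+$. $\mathcal{L}$ is the set of probability measures $\mu$ on $\mathbb{R}$ with $F_\mu(z+2\pi)=F_\mu(z)+2\pi$ for all $z\in\mathbb{C}^+$. For a probability measure $\nu$ on the unit circle, $\psi_\nu(z)=\int\frac{z\zeta}{1-z\zeta}d\nu(\zeta)$ and $\eta_\nu=\psi_\nu/(1+\psi_\nu)$ on $\mathbb{D}$. $W(\mu)$ is the push-forward of $\mu$ under $x\mapsto e^{-ix}$. *)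

theory Defs
  imports "HOL-Probability.Probability"
begin

definition real_prob_measure :: "real measure \<Rightarrow> bool" where
  "real_prob_measure \<mu> \<longleftrightarrow> prob_space \<mu> \<and> sets \<mu> = sets (borel :: real measure)"

definition circle_prob_measure :: "complex measure \<Rightarrow> bool" where
  "circle_prob_measure \<nu> \<longleftrightarrow> prob_space \<nu> \<and> sets \<nu> = sets (borel :: complex measure)
     \<and> emeasure \<nu> (sphere 0 1) = 1"

definition upper_half_plane :: "complex set" where
  "upper_half_plane = {z. Im z > 0}"

definition cauchy_G :: "real measure \<Rightarrow> complex \<Rightarrow> complex" where
  "cauchy_G \<mu> z = (LINT x|\<mu>. 1 / (z - complex_of_real x))"

definition cauchy_F :: "real measure \<Rightarrow> complex \<Rightarrow> complex" where
  "cauchy_F \<mu> z = 1 / cauchy_G \<mu> z"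

definition class_L :: "real measure set" where
  "class_L = {\<mu>. real_prob_measure \<mu> \<and>
     (\<forall>z\<in>upper_half_plane. cauchy_F \<mu> (z + 2 * of_real pi) = cauchy_F \<mu> z + 2 * of_real pi)}"

definition psi_circ :: "complex measure \<Rightarrow> complex \<Rightarrow> complex" where
  "psi_circ \<nu> z = (LINT \<zeta>|\<nu>. z * \<zeta> / (1 - z * \<zeta>))"

definition eta_circ :: "complex measure \<Rightarrow> complex \<Rightarrow> complex" where
  "eta_circ \<nu> z = psi_circ \<nu> z / (1 + psi_circ \<nu> z)"

definition wrap_W :: "real measure \<Rightarrow> complex measure" where
  "wrap_W \<mu> = distr \<mu> borel (\<lambda>x. exp (- \<i> * complex_of_real x))"

end

theory Submission
  imports Defs
begin


lemma digamma_reflect: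
  fixes z :: complex
  assumes "z \<notin> \<int>"
  shows "Digamma (1 - z) - Digamma z = of_real pi * cot (of_real pi * z)"
proof -
  define g where "g t = Gamma t * Gamma (1 - t) * sin (of_real pi * t)" for t :: complex
  have sinnz: "sin (of_real pi * t) \<noteq> 0" if "t \<notin> \<int>" for t :: complex
    using that by (auto simp: sin_eq_0)
  have geq: "g t = of_real pi" if "t \<notin> \<int>" for t
    using Gamma_reflection_complex[of t] sinnz[OF that] by (simp add: g_def field_simps)
  have z1: "z \<notin> \<int>\<^sub>\<le>\<^sub>0" using assms nonpos_Ints_subset_Ints by blast
  have z2: "1 - z \<notin> \<int>\<^sub>\<le>\<^sub>0"
  proof
    assume "1 - z \<in> \<int>\<^sub>\<le>\<^sub>0"
    hence "1 - z \<in> \<int>" using nonpos_Ints_subset_Ints by blast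
    hence "1 - (1 - z) \<in> \<int>" by (intro Ints_diff) auto
    thus False using assms by simp
  qed
  have d: "(g has_field_derivative
      (Gamma z * Digamma z * Gamma (1 - z) * sin (of_real pi * z)
       + Gamma z * (Gamma (1 - z) * Digamma (1 - z) * (-1)) * sin (of_real pi * z)
       + Gamma z * Gamma (1 - z) * (cos (of_real pi * z) * of_real pi))) (at z)"
    unfolding g_def
    apply (rule derivative_eq_intros has_field_derivative_Gamma DERIV_chain2[OF has_field_derivative_Gamma] | simp add: z1 z2)+
    by (simp add: algebra_simps)
  have d0: "(g has_field_derivative 0) (at z)"
  proof (rule has_field_derivative_transform_within_open[of "\<lambda>_. of_real pi" 0 z "- \<int>"])
    show "((\<lambda>_. complex_of_real pi) has_field_derivative 0) (at z)" by simp
    show "open (- (\<int>::complex set))" by (intro open_Compl closed_Ints)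
    show "z \<in> - \<int>" using assms by simp
    show "\<And>t. t \<in> - \<int> \<Longrightarrow> of_real pi = g t" using geq by simp
  qed
  from DERIV_unique[OF d d0] have
    "Gamma z * Gamma (1 - z) * ((Digamma z - Digamma (1 - z)) * sin (of_real pi * z) + cos (of_real pi * z) * of_real pi) = 0"
    by (simp add: algebra_simps)
  moreover have "Gamma z \<noteq> 0" "Gamma (1 - z) \<noteq> 0" using z1 z2 by (simp_all add: Gamma_eq_zero_iff)
  ultimately have "(Digamma z - Digamma (1 - z)) * sin (of_real pi * z) + cos (of_real pi * z) * of_real pi = 0"
    by simp
  with sinnz[OF assms] show ?thesis
    by (simp add: cot_def field_simps)
qed

lemma cot_pfd:
  fixes z :: complex
  assumes "z \<notin> \<int>"
  shows "(\<lambda>N. \<Sum>k<N. inverse (z + of_nat k) - inverse (1 - z + of_nat k)) \<longlonglongrightarrow> of_real pi * cot (of_real pi * z)"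
proof -
  have z0: "z \<noteq> 0" using assms by auto
  have z1: "1 - z \<noteq> 0" using assms by auto
  have a: "(\<lambda>k. inverse (of_nat (Suc k)) - inverse (z + of_nat k)) sums (Digamma z + euler_mascheroni)"
    using summable_sums[OF summable_Digamma[OF z0]] by (simp add: Digamma_def)
  have b: "(\<lambda>k. inverse (of_nat (Suc k)) - inverse ((1 - z) + of_nat k)) sums (Digamma (1 - z) + euler_mascheroni)"
    using summable_sums[OF summable_Digamma[OF z1]] by (simp add: Digamma_def)
  from sums_diff[OF b a] have "(\<lambda>k. inverse (z + of_nat k) - inverse (1 - z + of_nat k)) sums (Digamma (1 - z) - Digamma z)"
    by (simp add: algebra_simps)
  thus ?thesis using digamma_reflect[OF assms] by (simp add: sums_def)
qed

definition kk :: "complex \<Rightarrow> complex" where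
  "kk w = (1 + exp (\<i> * w)) / (1 - exp (\<i> * w))"

definition SS :: "nat \<Rightarrow> complex \<Rightarrow> complex" where
  "SS N w = (\<Sum>k<N. 1 / (w + 2 * of_real pi * of_nat k) + 1 / (w - 2 * of_real pi * (of_nat k + 1)))"

lemma cot_kk:
  fixes w :: complex
  assumes "sin (w / 2) \<noteq> 0"
  shows "cot (w / 2) = - \<i> * kk w"
proof -
  define e where "e = exp (\<i> * (w / 2))"
  have enz: "e \<noteq> 0" by (simp add: e_def)
  have e2: "exp (\<i> * w) = e * e" unfolding e_def by (simp flip: exp_add)
  have einv: "exp (- (\<i> * (w / 2))) = inverse e" unfolding e_def by (rule exp_minus)
  have c: "cos (w / 2) = (e + inverse e) / 2" unfolding cos_exp_eq einv e_def by (rule refl)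
  have s: "sin (w / 2) = (e - inverse e) / (2 * \<i>)" unfolding sin_exp_eq einv e_def by (rule refl)
  have d: "e - inverse e \<noteq> 0" using assms s by auto
  have d2: "1 - e * e \<noteq> 0"
  proof
    assume "1 - e * e = 0"
    hence "e - inverse e = 0" using enz by (simp add: field_simps)
    thus False using d by simp
  qed
  show ?thesis unfolding cot_def kk_def c s e2 using enz d d2
    by (simp add: field_simps)
qed

lemma SS_lim:
  assumes "Im w \<noteq> 0"
  shows "(\<lambda>N. SS N w) \<longlonglongrightarrow> - \<i> * kk w / 2"
proof -
  define z where "z = w / (2 * of_real pi)"
  have pi0: "complex_of_real pi \<noteq> 0" by simp
  have zI: "z \<notin> \<int>"
  proof
    assume "z \<in> \<int>" then have "Im z = 0" by (auto elim: Ints_cases)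
    thus False using assms by (simp add: z_def Im_divide_of_real)
  qed
  have eq: "SS N w = (\<Sum>k<N. inverse (z + of_nat k) - inverse (1 - z + of_nat k)) / (2 * of_real pi)" for N
    unfolding SS_def sum_divide_distrib
  proof (rule sum.cong[OF refl])
    fix k assume "k \<in> {..<N}"
    have w: "w = 2 * of_real pi * z" using pi0 by (simp add: z_def)
    have n1: "z + of_nat k \<noteq> 0"
    proof
      assume "z + of_nat k = 0" hence "z = - of_nat k" by (simp add: eq_neg_iff_add_eq_0)
      thus False using zI by simp
    qed
    have n2: "1 - z + of_nat k \<noteq> 0"
    proof
      assume "1 - z + of_nat k = 0" hence "z = 1 + of_nat k" by (simp add: algebra_simps)
      thus False using zI by simp
    qed
    show "1 / (w + 2 * of_real pi * of_nat k) + 1 / (w - 2 * of_real pi * (of_nat k + 1)) =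
        (inverse (z + of_nat k) - inverse (1 - z + of_nat k)) / (2 * of_real pi)"
    proof -
      have A: "w + 2 * of_real pi * of_nat k = (2 * of_real pi) * (z + of_nat k)" by (simp add: w algebra_simps)
      have B: "w - 2 * of_real pi * (of_nat k + 1) = - (2 * of_real pi) * (1 - z + of_nat k)" by (simp add: w algebra_simps)
      have A': "1 / (w + 2 * of_real pi * of_nat k) = inverse (z + of_nat k) / (2 * of_real pi)"
        unfolding A by (simp add: inverse_eq_divide mult.commute)
      have B': "1 / (w - 2 * of_real pi * (of_nat k + 1)) = - inverse (1 - z + of_nat k) / (2 * of_real pi)"
        unfolding B by (simp add: inverse_eq_divide mult.commute)
      show ?thesis unfolding A' B' by (simp add: diff_divide_distrib)
    qed
  qed
  have "(\<lambda>N. SS N w) \<longlonglongrightarrow> of_real pi * cot (of_real pi * z) / (2 * of_real pi)"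
    unfolding eq by (intro tendsto_divide tendsto_const cot_pfd[OF zI]) (simp)
  moreover have "of_real pi * cot (of_real pi * z) / (2 * of_real pi) = cot (w / 2) / 2"
    using pi0 by (simp add: z_def)
  moreover have "sin (w / 2) \<noteq> 0"
  proof
    assume "sin (w / 2) = 0"
    then obtain n :: int where "w / 2 = of_int n * of_real pi" by (auto simp: sin_eq_0)
    hence "Im (w / 2) = 0" by simp
    thus False using assms by simp
  qed
  ultimately show ?thesis using cot_kk by simp
qed



lemma rpm_prob: "real_prob_measure \<mu> \<Longrightarrow> prob_space \<mu>"
  by (simp add: real_prob_measure_def)

lemma rpm_meas:
  fixes f :: "real \<Rightarrow> 'b::topological_space"
  assumes "real_prob_measure \<mu>" "f \<in> borel_measurable borel"
  shows "f \<in> borel_measurable \<mu>"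
proof -
  have "sets \<mu> = sets borel" using assms(1) by (simp add: real_prob_measure_def)
  then have "measurable \<mu> (borel :: 'b measure) = measurable (borel :: real measure) (borel :: 'b measure)"
    by (rule measurable_cong_sets) simp
  thus ?thesis using assms(2) by simp
qed

lemma rpm_int:
  fixes f :: "real \<Rightarrow> 'b::{banach, second_countable_topology}"
  assumes "real_prob_measure \<mu>" "f \<in> borel_measurable borel" "\<And>x. norm (f x) \<le> B"
  shows "integrable \<mu> f"
proof -
  interpret prob_space \<mu> using assms(1) by (rule rpm_prob)
  show ?thesis by (rule integrable_const_bound[of _ B]) (auto simp: assms rpm_meas)
qed

lemma norm_inv_le:
  fixes w :: complex
  assumes "b > 0" "Im w \<ge> b"
  shows "norm (1 / w) \<le> 1 / b"
proof -
  have "b \<le> norm w" using assms abs_Im_le_cmod[of w] by linarith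
  thus ?thesis using assms by (simp add: norm_divide) (rule divide_left_mono, auto intro!: mult_pos_pos)
qed

lemma meas_inv_shift: "(\<lambda>x::real. 1 / (z - complex_of_real x)) \<in> borel_measurable borel"
  by measurable

lemma meas_kk: "(\<lambda>x::real. kk (z - complex_of_real x)) \<in> borel_measurable borel"
  unfolding kk_def by measurable

lemma G_integrable:
  assumes "real_prob_measure \<mu>" "Im z > 0"
  shows "integrable \<mu> (\<lambda>x. 1 / (z - complex_of_real x))"
  by (rule rpm_int[OF assms(1) meas_inv_shift, where B="1 / Im z"]) (rule norm_inv_le, use assms in auto)

lemma sq_int_le:
  fixes r :: "'a \<Rightarrow> real"
  assumes "prob_space M" "integrable M r" "integrable M (\<lambda>x. (r x)\<^sup>2)"
  shows "(integral\<^sup>L M r)\<^sup>2 \<le> integral\<^sup>L M (\<lambda>x. (r x)\<^sup>2)"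
proof -
  interpret prob_space M by fact
  have "0 \<le> variance r" by (rule variance_positive)
  also have "variance r = expectation (\<lambda>x. (r x)\<^sup>2) - (expectation r)\<^sup>2"
    by (rule variance_eq) (use assms in auto)
  finally show ?thesis by simp
qed

lemma Im_inv: "Im (1 / (w::complex)) = - Im w * (norm (1 / w))\<^sup>2"
proof -
  have "(norm (1 / w))\<^sup>2 = 1 / ((Re w)\<^sup>2 + (Im w)\<^sup>2)"
    by (simp add: norm_divide power_divide cmod_power2)
  thus ?thesis by (simp add: Im_divide)
qed

lemma ImF_ge:
  assumes "real_prob_measure \<mu>" "Im z > 0"
  shows "Im (cauchy_F \<mu> z) \<ge> Im z" "cauchy_G \<mu> z \<noteq> 0"
proof -
  interpret prob_space \<mu> using assms(1) by (rule rpm_prob)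
  define g where "g x = 1 / (z - complex_of_real x)" for x
  define b where "b = Im z"
  have bpos: "b > 0" using assms by (simp add: b_def)
  have gi: "integrable \<mu> g" unfolding g_def by (rule G_integrable[OF assms])
  have gb: "norm (g x) \<le> 1 / b" for x unfolding g_def b_def by (rule norm_inv_le) (use assms in auto)
  have gm: "g \<in> borel_measurable borel" unfolding g_def by (rule meas_inv_shift)
  have sqi: "integrable \<mu> (\<lambda>x. (norm (g x))\<^sup>2)"
    by (rule rpm_int[OF assms(1), of _ "(1/b)^2"]) (use gm gb in \<open>auto intro!: power_mono\<close>)
  have reb: "(Re (g x))\<^sup>2 \<le> (1/b)\<^sup>2" for x
    by (metis abs_Re_le_cmod gb order_trans power2_abs abs_ge_zero power_mono)
  have imb: "(Im (g x))\<^sup>2 \<le> (1/b)\<^sup>2" for x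
    by (metis abs_Im_le_cmod gb order_trans power2_abs abs_ge_zero power_mono)
  have rei: "integrable \<mu> (\<lambda>x. (Re (g x))\<^sup>2)"
    by (rule rpm_int[OF assms(1), where B="(1/b)^2"]) (use gm reb in auto)
  have imi: "integrable \<mu> (\<lambda>x. (Im (g x))\<^sup>2)"
    by (rule rpm_int[OF assms(1), where B="(1/b)^2"]) (use gm imb in auto)
  have Gdef: "cauchy_G \<mu> z = integral\<^sup>L \<mu> g" by (simp add: cauchy_G_def g_def[abs_def])
  have ReG: "Re (cauchy_G \<mu> z) = integral\<^sup>L \<mu> (\<lambda>x. Re (g x))" unfolding Gdef by (rule integral_Re[OF gi, symmetric])
  have ImG': "Im (cauchy_G \<mu> z) = integral\<^sup>L \<mu> (\<lambda>x. Im (g x))" unfolding Gdef by (rule integral_Im[OF gi, symmetric])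
  have img: "Im (g x) = - b * (norm (g x))\<^sup>2" for x
  proof -
    have "Im (z - complex_of_real x) = b" by (simp add: b_def)
    moreover have "z - complex_of_real x \<noteq> 0" using bpos \<open>Im (z - complex_of_real x) = b\<close> by auto
    ultimately show ?thesis unfolding g_def using Im_inv[of "z - complex_of_real x"] by simp
  qed
  define J where "J = integral\<^sup>L \<mu> (\<lambda>x. (norm (g x))\<^sup>2)"
  have ImG: "Im (cauchy_G \<mu> z) = - b * J" unfolding ImG' img J_def by simp
  have "(norm (cauchy_G \<mu> z))\<^sup>2 = (Re (cauchy_G \<mu> z))\<^sup>2 + (Im (cauchy_G \<mu> z))\<^sup>2"
    by (rule cmod_power2)
  also have "\<dots> \<le> integral\<^sup>L \<mu> (\<lambda>x. (Re (g x))\<^sup>2) + integral\<^sup>L \<mu> (\<lambda>x. (Im (g x))\<^sup>2)"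
    unfolding ReG ImG' by (intro add_mono sq_int_le prob_space_axioms integrable_Re integrable_Im gi rei imi)
  also have "\<dots> = J" unfolding J_def by (subst Bochner_Integration.integral_add[OF rei imi, symmetric]) (simp add: cmod_power2)
  finally have GJ: "(norm (cauchy_G \<mu> z))\<^sup>2 \<le> J" .
  have Jpos: "J > 0"
  proof -
    have "J \<ge> 0" unfolding J_def by (rule integral_nonneg_AE) auto
    moreover have "J \<noteq> 0"
    proof
      assume "J = 0"
      hence "AE x in \<mu>. (norm (g x))\<^sup>2 = 0" unfolding J_def
        by (subst (asm) integral_nonneg_eq_0_iff_AE) (use sqi in auto)
      moreover have "g x \<noteq> 0" for x unfolding g_def using bpos by (auto simp: b_def)
      ultimately have "AE x in \<mu>. False" by simp
      thus False by simp
    qed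
    ultimately show ?thesis by simp
  qed
  have Gnz: "cauchy_G \<mu> z \<noteq> 0" using ImG Jpos bpos by auto
  thus "cauchy_G \<mu> z \<noteq> 0" .
  have n2: "(norm (cauchy_G \<mu> z))\<^sup>2 > 0" using Gnz by simp
  have "Im (cauchy_F \<mu> z) = b * J / (norm (cauchy_G \<mu> z))\<^sup>2"
    unfolding cauchy_F_def using ImG by (simp add: Im_divide cmod_power2)
  also have "\<dots> \<ge> b" using GJ n2 bpos Jpos by (simp add: field_simps mult_left_mono)
  finally show "Im (cauchy_F \<mu> z) \<ge> Im z" by (simp add: b_def)
qed



lemma F_per_nat:
  assumes "\<mu> \<in> class_L" "Im z > 0"
  shows "cauchy_F \<mu> (z + 2 * of_real pi * of_nat n) = cauchy_F \<mu> z + 2 * of_real pi * of_nat n"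
proof (induction n)
  case 0 thus ?case by simp
next
  case (Suc n)
  have per: "\<And>w. Im w > 0 \<Longrightarrow> cauchy_F \<mu> (w + 2 * of_real pi) = cauchy_F \<mu> w + 2 * of_real pi"
    using assms(1) by (auto simp: class_L_def upper_half_plane_def)
  have "z + 2 * of_real pi * of_nat (Suc n) = (z + 2 * of_real pi * of_nat n) + 2 * of_real pi"
    by (simp add: algebra_simps)
  also have "cauchy_F \<mu> \<dots> = cauchy_F \<mu> (z + 2 * of_real pi * of_nat n) + 2 * of_real pi"
    by (rule per) (use assms in simp)
  finally show ?case using Suc by (simp add: algebra_simps)
qed

lemma F_per_neg:
  assumes "\<mu> \<in> class_L" "Im z > 0"
  shows "cauchy_F \<mu> (z - 2 * of_real pi * of_nat n) = cauchy_F \<mu> z - 2 * of_real pi * of_nat n"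
proof -
  have "cauchy_F \<mu> z = cauchy_F \<mu> ((z - 2 * of_real pi * of_nat n) + 2 * of_real pi * of_nat n)" by simp
  also have "\<dots> = cauchy_F \<mu> (z - 2 * of_real pi * of_nat n) + 2 * of_real pi * of_nat n"
    by (rule F_per_nat) (use assms in simp_all)
  finally show ?thesis by simp
qed

lemma key_f:
  fixes b s :: real
  assumes b: "b > 0"
  shows "1 / (b\<^sup>2 + s\<^sup>2) \<le> (2 + 2 * pi\<^sup>2 / b\<^sup>2) / (2 * pi * b) * (arctan ((s + pi) / b) - arctan ((s - pi) / b))"
proof -
  have "\<exists>\<xi>>s - pi. \<xi> < s + pi \<and> arctan ((s + pi) / b) - arctan ((s - pi) / b) = ((s + pi) - (s - pi)) * (inverse (1 + (\<xi> / b)\<^sup>2) * (1 / b))"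
    by (rule MVT2) (use b in \<open>auto intro!: derivative_eq_intros\<close>)
  then obtain \<xi> where xi: "\<xi> > s - pi" "\<xi> < s + pi"
    and eq: "arctan ((s + pi) / b) - arctan ((s - pi) / b) = 2 * pi * (inverse (1 + (\<xi> / b)\<^sup>2) * (1 / b))" by auto
  have eq2: "inverse (1 + (\<xi> / b)\<^sup>2) * (1 / b) = b / (b\<^sup>2 + \<xi>\<^sup>2)"
    using b by (simp add: field_simps power2_eq_square)
  have "\<bar>\<xi>\<bar> \<le> \<bar>s\<bar> + pi" using xi by linarith
  hence "\<xi>\<^sup>2 \<le> (\<bar>s\<bar> + pi)\<^sup>2" by (metis abs_ge_zero power2_abs power_mono)
  also have "\<dots> \<le> 2 * s\<^sup>2 + 2 * pi\<^sup>2"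
  proof -
    have h: "0 \<le> (\<bar>s\<bar> - pi)\<^sup>2" by simp
    have e1: "(\<bar>s\<bar> + pi)\<^sup>2 = \<bar>s\<bar>\<^sup>2 + 2 * \<bar>s\<bar> * pi + pi\<^sup>2" by (simp add: power2_sum)
    have e2: "(\<bar>s\<bar> - pi)\<^sup>2 = \<bar>s\<bar>\<^sup>2 - 2 * \<bar>s\<bar> * pi + pi\<^sup>2" by (simp add: power2_diff)
    show ?thesis using h e1 e2 by simp
  qed
  finally have xb: "\<xi>\<^sup>2 \<le> 2 * s\<^sup>2 + 2 * pi\<^sup>2" .
  define L where "L = 2 + 2 * pi\<^sup>2 / b\<^sup>2"
  have Lb: "L * (b\<^sup>2 + s\<^sup>2) = 2 * b\<^sup>2 + 2 * s\<^sup>2 + 2 * pi\<^sup>2 + 2 * pi\<^sup>2 * s\<^sup>2 / b\<^sup>2"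
    using b by (simp add: L_def field_simps)
  have t0: "0 \<le> 2 * pi\<^sup>2 * s\<^sup>2 / b\<^sup>2" by simp
  have t1: "0 \<le> b\<^sup>2" by simp
  have "b\<^sup>2 + \<xi>\<^sup>2 \<le> L * (b\<^sup>2 + s\<^sup>2)" unfolding Lb using xb t0 t1 by linarith
  hence le1: "b\<^sup>2 + \<xi>\<^sup>2 \<le> L * (b\<^sup>2 + s\<^sup>2)" .
  have Lpos: "L > 0" unfolding L_def by (simp add: add_pos_nonneg)
  have p1: "b\<^sup>2 + \<xi>\<^sup>2 > 0" using b by (simp add: add_pos_nonneg)
  have p2: "b\<^sup>2 + s\<^sup>2 > 0" using b by (simp add: add_pos_nonneg)
  have "1 / (b\<^sup>2 + s\<^sup>2) = L / (L * (b\<^sup>2 + s\<^sup>2))" using Lpos by simp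
  also have "\<dots> \<le> L / (b\<^sup>2 + \<xi>\<^sup>2)"
    by (rule divide_left_mono[OF le1]) (use Lpos p1 p2 in auto)
  also have "\<dots> = L / (2 * pi * b) * (2 * pi * (b / (b\<^sup>2 + \<xi>\<^sup>2)))"
    using b by (simp add: field_simps)
  finally show ?thesis unfolding eq eq2 L_def .
qed



lemma sum_bound:
  fixes b t :: real
  assumes b: "b > 0"
  shows "(\<Sum>k<N. 1 / (b\<^sup>2 + (t + 2 * pi * real k)\<^sup>2) + 1 / (b\<^sup>2 + (t - 2 * pi * (real k + 1))\<^sup>2))
         \<le> (2 + 2 * pi\<^sup>2 / b\<^sup>2) / b"
proof -
  define K where "K = (2 + 2 * pi\<^sup>2 / b\<^sup>2) / (2 * pi * b)"
  define a where "a k = arctan ((t + 2 * pi * real k - pi) / b)" for k :: nat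
  define c where "c k = arctan ((t - 2 * pi * real k - pi) / b)" for k :: nat
  have t1: "1 / (b\<^sup>2 + (t + 2 * pi * real k)\<^sup>2) \<le> K * (a (Suc k) - a k)" for k
  proof -
    have e: "t + 2 * pi * real k + pi = t + 2 * pi * real (Suc k) - pi" by (simp add: algebra_simps)
    show ?thesis using key_f[OF b, of "t + 2 * pi * real k"] unfolding K_def a_def e .
  qed
  have t2: "1 / (b\<^sup>2 + (t - 2 * pi * (real k + 1))\<^sup>2) \<le> K * (c k - c (Suc k))" for k
  proof -
    have e1: "t - 2 * pi * (real k + 1) + pi = t - 2 * pi * real k - pi" by (simp add: algebra_simps)
    have e2: "t - 2 * pi * (real k + 1) - pi = t - 2 * pi * real (Suc k) - pi" by (simp add: algebra_simps)
    show ?thesis using key_f[OF b, of "t - 2 * pi * (real k + 1)"] unfolding K_def c_def e1 e2 .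
  qed
  have "(\<Sum>k<N. 1 / (b\<^sup>2 + (t + 2 * pi * real k)\<^sup>2) + 1 / (b\<^sup>2 + (t - 2 * pi * (real k + 1))\<^sup>2))
      \<le> (\<Sum>k<N. K * (a (Suc k) - a k) + K * (c k - c (Suc k)))"
    by (intro sum_mono add_mono t1 t2)
  also have "\<dots> = K * ((a N - a 0) + (c 0 - c N))"
    by (simp add: sum.distrib sum_distrib_left[symmetric] sum_lessThan_telescope sum_lessThan_telescope' distrib_left)
  also have "\<dots> \<le> K * (2 * pi)"
  proof (rule mult_left_mono)
    show "0 \<le> K" unfolding K_def using b by (simp add: add_pos_nonneg)
    show "a N - a 0 + (c 0 - c N) \<le> 2 * pi" unfolding a_def c_def
      using arctan_bounded[of "(t + 2 * pi * real N - pi) / b"] arctan_bounded[of "(t + 2 * pi * real 0 - pi) / b"]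
            arctan_bounded[of "(t - 2 * pi * real 0 - pi) / b"] arctan_bounded[of "(t - 2 * pi * real N - pi) / b"]
      by linarith
  qed
  also have "\<dots> = (2 + 2 * pi\<^sup>2 / b\<^sup>2) / b" unfolding K_def by simp
  finally show ?thesis .
qed

lemma norm_inv_sq:
  fixes w :: complex and c :: real
  assumes "b > 0" "Im w \<ge> b"
  shows "(norm (1 / (w + of_real c)))\<^sup>2 \<le> 1 / (b\<^sup>2 + (Re w + c)\<^sup>2)"
proof -
  have "(norm (w + of_real c))\<^sup>2 = (Re w + c)\<^sup>2 + (Im w)\<^sup>2" by (simp add: cmod_power2)
  moreover have "b\<^sup>2 \<le> (Im w)\<^sup>2" using assms by (simp add: power_mono)
  ultimately have "b\<^sup>2 + (Re w + c)\<^sup>2 \<le> (norm (w + of_real c))\<^sup>2" by simp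
  moreover have "0 < b\<^sup>2 + (Re w + c)\<^sup>2" using assms by (simp add: add_pos_nonneg)
  ultimately show ?thesis by (simp add: norm_divide power_divide) (rule divide_left_mono, auto intro!: mult_pos_pos)
qed

lemma inv_diff_bound:
  fixes u v :: complex
  assumes "u \<noteq> 0" "v \<noteq> 0"
  shows "norm (1 / u - 1 / v) \<le> norm (v - u) * ((norm (1 / u))\<^sup>2 + (norm (1 / v))\<^sup>2)"
proof -
  have "1 / u - 1 / v = (v - u) * (1 / u) * (1 / v)" using assms by (simp add: field_simps)
  hence "norm (1 / u - 1 / v) = norm (v - u) * (norm (1 / u) * norm (1 / v))" by (simp only: norm_mult mult.assoc)
  also have "norm (1 / u) * norm (1 / v) \<le> (norm (1 / u))\<^sup>2 + (norm (1 / v))\<^sup>2"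
  proof -
    have "2 * norm (1/u) * norm (1/v) \<le> (norm (1 / u))\<^sup>2 + (norm (1 / v))\<^sup>2" by (rule sum_squares_bound)
    moreover have "0 \<le> norm (1/u) * norm (1/v)" by simp
    ultimately show ?thesis by linarith
  qed
  hence "norm (v - u) * (norm (1 / u) * norm (1 / v)) \<le> norm (v - u) * ((norm (1 / u))\<^sup>2 + (norm (1 / v))\<^sup>2)"
    by (rule mult_left_mono) simp
  finally show ?thesis .
qed



lemma term_bound:
  fixes u v :: complex and c b :: real
  assumes "b > 0" "Im u \<ge> b" "Im v \<ge> b"
  shows "norm (1 / (u + of_real c) - 1 / (v + of_real c))
    \<le> norm (v - u) * (1 / (b\<^sup>2 + (Re u + c)\<^sup>2) + 1 / (b\<^sup>2 + (Re v + c)\<^sup>2))"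
proof -
  have nz: "u + of_real c \<noteq> 0" "v + of_real c \<noteq> 0"
    using assms by (auto simp: complex_eq_iff)
  have "norm (1 / (u + of_real c) - 1 / (v + of_real c))
      \<le> norm ((v + of_real c) - (u + of_real c)) * ((norm (1 / (u + of_real c)))\<^sup>2 + (norm (1 / (v + of_real c)))\<^sup>2)"
    by (rule inv_diff_bound[OF nz])
  also have "\<dots> \<le> norm (v - u) * (1 / (b\<^sup>2 + (Re u + c)\<^sup>2) + 1 / (b\<^sup>2 + (Re v + c)\<^sup>2))"
    by (simp, intro mult_left_mono add_mono norm_inv_sq) (use assms in auto)
  finally show ?thesis .
qed

lemma SS_diff_bound:
  fixes u v :: complex and b :: real
  assumes b: "b > 0" "Im u \<ge> b" "Im v \<ge> b"
  shows "norm (SS N u - SS N v) \<le> norm (v - u) * (2 * ((2 + 2 * pi\<^sup>2 / b\<^sup>2) / b))"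
proof -
  define T where "T t = (\<Sum>k<N. 1 / (b\<^sup>2 + (t + 2 * pi * real k)\<^sup>2) + 1 / (b\<^sup>2 + (t - 2 * pi * (real k + 1))\<^sup>2))" for t
  have e1: "w + 2 * complex_of_real pi * of_nat k = w + of_real (2 * pi * real k)" for w k by simp
  have e2: "w - 2 * complex_of_real pi * (of_nat k + 1) = w + of_real (- (2 * pi * (real k + 1)))" for w k by simp
  have eqS: "SS N u - SS N v = (\<Sum>k<N. (1 / (u + of_real (2 * pi * real k)) - 1 / (v + of_real (2 * pi * real k)))
         + (1 / (u + of_real (- (2 * pi * (real k + 1)))) - 1 / (v + of_real (- (2 * pi * (real k + 1))))))"
    unfolding SS_def e1 e2 sum_subtractf[symmetric] by (rule sum.cong) (auto simp: algebra_simps)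
  have "norm (SS N u - SS N v) \<le> (\<Sum>k<N. norm ((1 / (u + of_real (2 * pi * real k)) - 1 / (v + of_real (2 * pi * real k)))
         + (1 / (u + of_real (- (2 * pi * (real k + 1)))) - 1 / (v + of_real (- (2 * pi * (real k + 1)))))))"
    unfolding eqS by (rule norm_sum)
  also have "\<dots> \<le> (\<Sum>k<N. norm (v - u) * (1 / (b\<^sup>2 + (Re u + 2 * pi * real k)\<^sup>2) + 1 / (b\<^sup>2 + (Re v + 2 * pi * real k)\<^sup>2))
      + norm (v - u) * (1 / (b\<^sup>2 + (Re u + - (2 * pi * (real k + 1)))\<^sup>2) + 1 / (b\<^sup>2 + (Re v + - (2 * pi * (real k + 1)))\<^sup>2)))"
  proof (rule sum_mono)
    fix k assume "k \<in> {..<N}"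
    have t1: "norm (1 / (u + of_real (2 * pi * real k)) - 1 / (v + of_real (2 * pi * real k)))
      \<le> norm (v - u) * (1 / (b\<^sup>2 + (Re u + 2 * pi * real k)\<^sup>2) + 1 / (b\<^sup>2 + (Re v + 2 * pi * real k)\<^sup>2))"
      by (rule term_bound[OF b])
    have t2: "norm (1 / (u + of_real (- (2 * pi * (real k + 1)))) - 1 / (v + of_real (- (2 * pi * (real k + 1)))))
      \<le> norm (v - u) * (1 / (b\<^sup>2 + (Re u + - (2 * pi * (real k + 1)))\<^sup>2) + 1 / (b\<^sup>2 + (Re v + - (2 * pi * (real k + 1)))\<^sup>2))"
      by (rule term_bound[OF b])
    show "norm ((1 / (u + of_real (2 * pi * real k)) - 1 / (v + of_real (2 * pi * real k)))
         + (1 / (u + of_real (- (2 * pi * (real k + 1)))) - 1 / (v + of_real (- (2 * pi * (real k + 1))))))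
      \<le> norm (v - u) * (1 / (b\<^sup>2 + (Re u + 2 * pi * real k)\<^sup>2) + 1 / (b\<^sup>2 + (Re v + 2 * pi * real k)\<^sup>2))
      + norm (v - u) * (1 / (b\<^sup>2 + (Re u + - (2 * pi * (real k + 1)))\<^sup>2) + 1 / (b\<^sup>2 + (Re v + - (2 * pi * (real k + 1)))\<^sup>2))"
      by (rule order.trans[OF norm_triangle_ineq add_mono[OF t1 t2]])
  qed
  also have "\<dots> = norm (v - u) * (T (Re u) + T (Re v))"
    unfolding T_def sum_distrib_left[symmetric] sum.distrib[symmetric] distrib_left[symmetric]
    by (rule arg_cong[where f="\<lambda>x. norm (v - u) * x"], rule sum.cong) (auto simp: algebra_simps)
  also have "\<dots> \<le> norm (v - u) * (2 * ((2 + 2 * pi\<^sup>2 / b\<^sup>2) / b))"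
  proof (rule mult_left_mono)
    have "T (Re u) \<le> (2 + 2 * pi\<^sup>2 / b\<^sup>2) / b" unfolding T_def by (rule sum_bound[OF b(1)])
    moreover have "T (Re v) \<le> (2 + 2 * pi\<^sup>2 / b\<^sup>2) / b" unfolding T_def by (rule sum_bound[OF b(1)])
    ultimately show "T (Re u) + T (Re v) \<le> 2 * ((2 + 2 * pi\<^sup>2 / b\<^sup>2) / b)" by linarith
  qed simp
  finally show ?thesis .
qed



lemma kk_minus1:
  fixes w :: complex
  assumes b: "b > 0" "Im w \<ge> b"
  shows "norm (kk w - 1) \<le> 2 * exp (- b) / (1 - exp (- b))"
proof -
  define e where "e = exp (\<i> * w)"
  have ne: "norm e = exp (- Im w)" unfolding e_def by (simp add: norm_exp_eq_Re)
  have nle: "norm e \<le> exp (- b)" unfolding ne using b by simp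
  have eb: "exp (- b) < 1" using b by simp
  have d: "1 - exp (- b) \<le> norm (1 - e)"
    using norm_triangle_ineq2[of 1 e] nle by simp
  have dpos: "0 < 1 - exp (- b)" using eb by simp
  have e1: "1 - e \<noteq> 0" using d dpos by auto
  have "kk w - 1 = 2 * e / (1 - e)" unfolding kk_def e_def[symmetric] using e1 by (simp add: field_simps)
  hence "norm (kk w - 1) = 2 * norm e / norm (1 - e)" by (simp add: norm_divide norm_mult)
  also have "\<dots> \<le> 2 * exp (- b) / (1 - exp (- b))"
    by (rule frac_le) (use nle d dpos in auto)
  finally show ?thesis .
qed

lemma kk_bound:
  fixes w :: complex
  assumes b: "b > 0" "Im w \<ge> b"
  shows "norm (kk w) \<le> 1 + 2 * exp (- b) / (1 - exp (- b))"
proof -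
  have "norm (kk w) \<le> norm (kk w - 1) + norm (1::complex)" using norm_triangle_ineq[of "kk w - 1" 1] by simp
  thus ?thesis using kk_minus1[OF b] by simp
qed

lemma kk_integrable:
  assumes "real_prob_measure \<mu>" "Im z > 0"
  shows "integrable \<mu> (\<lambda>x. kk (z - complex_of_real x))"
  by (rule rpm_int[OF assms(1) meas_kk, where B="1 + 2 * exp (- Im z) / (1 - exp (- Im z))"])
     (rule kk_bound, use assms in auto)

lemma int_SS:
  assumes L: "\<mu> \<in> class_L" and z: "Im z > 0"
  shows "integral\<^sup>L \<mu> (\<lambda>x. SS N (z - complex_of_real x)) = SS N (cauchy_F \<mu> z)"
    and "integrable \<mu> (\<lambda>x. SS N (z - complex_of_real x))"
proof -
  have rpm: "real_prob_measure \<mu>" using L by (simp add: class_L_def)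
  have GF: "cauchy_G \<mu> w = 1 / cauchy_F \<mu> w" for w by (simp add: cauchy_F_def)
  define p where "p k = z + 2 * complex_of_real pi * of_nat k" for k :: nat
  define q where "q k = z - 2 * complex_of_real pi * (of_nat k + 1)" for k :: nat
  have pI: "Im (p k) > 0" "Im (q k) > 0" for k using z by (simp_all add: p_def q_def)
  have eq: "SS N (z - complex_of_real x) = (\<Sum>k<N. 1 / (p k - complex_of_real x) + 1 / (q k - complex_of_real x))" for x
    unfolding SS_def p_def q_def by (rule sum.cong) (simp_all add: algebra_simps)
  have int1: "integrable \<mu> (\<lambda>x. 1 / (p k - complex_of_real x) + 1 / (q k - complex_of_real x))" for k
    by (intro Bochner_Integration.integrable_add G_integrable[OF rpm] pI)
  show "integrable \<mu> (\<lambda>x. SS N (z - complex_of_real x))"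
    unfolding eq by (intro Bochner_Integration.integrable_sum int1)
  have "integral\<^sup>L \<mu> (\<lambda>x. SS N (z - complex_of_real x)) =
      (\<Sum>k<N. integral\<^sup>L \<mu> (\<lambda>x. 1 / (p k - complex_of_real x) + 1 / (q k - complex_of_real x)))"
    unfolding eq by (rule Bochner_Integration.integral_sum) (rule int1)
  also have "\<dots> = (\<Sum>k<N. cauchy_G \<mu> (p k) + cauchy_G \<mu> (q k))"
    by (rule sum.cong[OF refl]) (simp add: cauchy_G_def Bochner_Integration.integral_add G_integrable[OF rpm] pI)
  also have "\<dots> = SS N (cauchy_F \<mu> z)"
    unfolding SS_def GF p_def q_def
  proof (rule sum.cong[OF refl])
    fix k assume "k \<in> {..<N}"
    have "cauchy_F \<mu> (z - 2 * complex_of_real pi * (of_nat k + 1)) = cauchy_F \<mu> z - 2 * complex_of_real pi * (of_nat k + 1)"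
      using F_per_neg[OF L z, of "Suc k"] by (simp add: add.commute)
    thus "1 / cauchy_F \<mu> (z + 2 * complex_of_real pi * of_nat k) + 1 / cauchy_F \<mu> (z - 2 * complex_of_real pi * (of_nat k + 1)) =
        1 / (cauchy_F \<mu> z + 2 * complex_of_real pi * of_nat k) + 1 / (cauchy_F \<mu> z - 2 * complex_of_real pi * (of_nat k + 1))"
      using F_per_nat[OF L z, of k] by simp
  qed
  finally show "integral\<^sup>L \<mu> (\<lambda>x. SS N (z - complex_of_real x)) = SS N (cauchy_F \<mu> z)" .
qed



lemma main_diff:
  assumes L: "\<mu> \<in> class_L" and z: "Im z > 0" and z0: "Im z0 > 0"
  shows "integral\<^sup>L \<mu> (\<lambda>x. kk (z - complex_of_real x)) - integral\<^sup>L \<mu> (\<lambda>x. kk (z0 - complex_of_real x))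
       = kk (cauchy_F \<mu> z) - kk (cauchy_F \<mu> z0)"
proof -
  have rpm: "real_prob_measure \<mu>" using L by (simp add: class_L_def)
  interpret prob_space \<mu> using rpm by (rule rpm_prob)
  define b where "b = min (Im z) (Im z0)"
  have b: "b > 0" "Im z \<ge> b" "Im z0 \<ge> b" using z z0 by (auto simp: b_def)
  define C where "C = norm (z0 - z) * (2 * ((2 + 2 * pi\<^sup>2 / b\<^sup>2) / b))"
  define s where "s N x = SS N (z - complex_of_real x) - SS N (z0 - complex_of_real x)" for N x
  define f where "f x = - \<i> * kk (z - complex_of_real x) / 2 - - \<i> * kk (z0 - complex_of_real x) / 2" for x
  have ki: "integrable \<mu> (\<lambda>x. kk (z - complex_of_real x))" "integrable \<mu> (\<lambda>x. kk (z0 - complex_of_real x))"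
    by (intro kk_integrable rpm z z0)+
  have fm: "f \<in> borel_measurable \<mu>" unfolding f_def by (intro rpm_meas[OF rpm]) (unfold kk_def, measurable)
  have sm: "s N \<in> borel_measurable \<mu>" for N unfolding s_def by (intro rpm_meas[OF rpm]) (unfold SS_def, measurable)
  have lim: "(\<lambda>N. s N x) \<longlonglongrightarrow> f x" for x
    unfolding s_def f_def by (intro tendsto_diff SS_lim) (use z z0 in auto)
  have bnd: "norm (s N x) \<le> C" for N x
    unfolding s_def C_def using SS_diff_bound[OF b(1), of "z - complex_of_real x" "z0 - complex_of_real x" N] b
    by simp
  have "(\<lambda>N. integral\<^sup>L \<mu> (s N)) \<longlonglongrightarrow> integral\<^sup>L \<mu> f"
    by (rule integral_dominated_convergence[where w="\<lambda>_. C"]) (use fm sm lim bnd in auto)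
  moreover have "integral\<^sup>L \<mu> (s N) = SS N (cauchy_F \<mu> z) - SS N (cauchy_F \<mu> z0)" for N
    unfolding s_def using int_SS[OF L z, of N] int_SS[OF L z0, of N] by (simp add: Bochner_Integration.integral_diff)
  ultimately have l1: "(\<lambda>N. SS N (cauchy_F \<mu> z) - SS N (cauchy_F \<mu> z0)) \<longlonglongrightarrow> integral\<^sup>L \<mu> f" by simp
  have "Im (cauchy_F \<mu> z) > 0" "Im (cauchy_F \<mu> z0) > 0"
    using ImF_ge(1)[OF rpm z] ImF_ge(1)[OF rpm z0] z z0 by auto
  hence l2: "(\<lambda>N. SS N (cauchy_F \<mu> z) - SS N (cauchy_F \<mu> z0)) \<longlonglongrightarrow>
      - \<i> * kk (cauchy_F \<mu> z) / 2 - - \<i> * kk (cauchy_F \<mu> z0) / 2"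
    by (intro tendsto_diff SS_lim) auto
  have eq: "integral\<^sup>L \<mu> f = - \<i> * kk (cauchy_F \<mu> z) / 2 - - \<i> * kk (cauchy_F \<mu> z0) / 2"
    by (rule LIMSEQ_unique[OF l1 l2])
  have "integral\<^sup>L \<mu> f = - \<i> / 2 * (integral\<^sup>L \<mu> (\<lambda>x. kk (z - complex_of_real x)) - integral\<^sup>L \<mu> (\<lambda>x. kk (z0 - complex_of_real x)))"
  proof -
    have "f = (\<lambda>x. - \<i> / 2 * (kk (z - complex_of_real x) - kk (z0 - complex_of_real x)))"
      by (rule ext) (simp add: f_def algebra_simps)
    thus ?thesis using ki by (simp add: Bochner_Integration.integral_diff)
  qed
  with eq have "- \<i> / 2 * (integral\<^sup>L \<mu> (\<lambda>x. kk (z - complex_of_real x)) - integral\<^sup>L \<mu> (\<lambda>x. kk (z0 - complex_of_real x)))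
     = - \<i> / 2 * (kk (cauchy_F \<mu> z) - kk (cauchy_F \<mu> z0))" by (simp add: algebra_simps)
  thus ?thesis by simp
qed



lemma kk_minus1':
  fixes w :: complex
  assumes b: "b \<ge> 1" "Im w \<ge> b"
  shows "norm (kk w - 1) \<le> 2 * exp (- b) / (1 - exp (- 1))"
proof -
  have "norm (kk w - 1) \<le> 2 * exp (- b) / (1 - exp (- b))" by (rule kk_minus1) (use b in auto)
  also have "\<dots> \<le> 2 * exp (- b) / (1 - exp (- 1))"
    by (rule divide_left_mono) (use b in auto)
  finally show ?thesis .
qed

lemma B_lim: "(\<lambda>n. 2 * exp (- (real n + 1)) / (1 - exp (- 1))) \<longlonglongrightarrow> 0"
proof -
  have e: "exp (- (real n + 1)) = exp (- 1) ^ Suc n" for n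
    by (metis exp_of_nat_mult mult_minus1_right of_nat_Suc add.commute mult.commute minus_mult_left)
  have "(\<lambda>n. exp (- 1::real) ^ Suc n) \<longlonglongrightarrow> 0"
    by (rule LIMSEQ_Suc[OF LIMSEQ_power_zero]) simp
  hence "(\<lambda>n. 2 * exp (- 1::real) ^ Suc n / (1 - exp (- 1))) \<longlonglongrightarrow> 2 * 0 / (1 - exp (- 1))"
  proof (intro tendsto_intros)
    have "exp (-1::real) < exp 0" by (subst exp_less_cancel_iff) simp
    hence h: "0 < 1 - exp (-1::real)" by simp
    show "1 - exp (-1::real) \<noteq> 0" using h by (metis less_irrefl)
  qed
  thus ?thesis unfolding e by simp
qed

lemma lim_from_bound:
  fixes a :: "nat \<Rightarrow> complex"
  assumes "\<And>n. norm (a n - 1) \<le> 2 * exp (- (real n + 1)) / (1 - exp (- 1))"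
  shows "a \<longlonglongrightarrow> 1"
proof (rule LIM_zero_cancel, rule Lim_null_comparison[OF _ B_lim])
  show "\<forall>\<^sub>F n in sequentially. norm (a n - 1) \<le> 2 * exp (- (real n + 1)) / (1 - exp (- 1))"
    using assms by simp
qed

lemma main_id:
  assumes L: "\<mu> \<in> class_L" and z: "Im z > 0"
  shows "integral\<^sup>L \<mu> (\<lambda>x. kk (z - complex_of_real x)) = kk (cauchy_F \<mu> z)"
proof -
  have rpm: "real_prob_measure \<mu>" using L by (simp add: class_L_def)
  interpret prob_space \<mu> using rpm by (rule rpm_prob)
  define z0 where "z0 n = \<i> * of_real (real n + 1)" for n :: nat
  have z0I: "Im (z0 n) = real n + 1" for n by (simp add: z0_def)
  have l1: "(\<lambda>n. integral\<^sup>L \<mu> (\<lambda>x. kk (z0 n - complex_of_real x))) \<longlonglongrightarrow> 1"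
  proof (rule lim_from_bound)
    fix n
    have i: "integrable \<mu> (\<lambda>x. kk (z0 n - complex_of_real x))" by (rule kk_integrable[OF rpm]) (simp add: z0I)
    have "integral\<^sup>L \<mu> (\<lambda>x. kk (z0 n - complex_of_real x)) - 1 = integral\<^sup>L \<mu> (\<lambda>x. kk (z0 n - complex_of_real x) - 1)"
      using i by (simp add: Bochner_Integration.integral_diff prob_space)
    also have "norm \<dots> \<le> integral\<^sup>L \<mu> (\<lambda>x. norm (kk (z0 n - complex_of_real x) - 1))"
      by (rule integral_norm_bound)
    also have "\<dots> \<le> integral\<^sup>L \<mu> (\<lambda>x. 2 * exp (- (real n + 1)) / (1 - exp (- 1)))"
    proof (rule integral_mono)
      fix x
      show "norm (kk (z0 n - complex_of_real x) - 1) \<le> 2 * exp (- (real n + 1)) / (1 - exp (- 1))"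
        by (rule kk_minus1') (simp_all add: z0I)
    qed (use i in auto)
    also have "\<dots> = 2 * exp (- (real n + 1)) / (1 - exp (- 1))" by (simp add: prob_space)
    finally show "norm (integral\<^sup>L \<mu> (\<lambda>x. kk (z0 n - complex_of_real x)) - 1) \<le> 2 * exp (- (real n + 1)) / (1 - exp (- 1))" .
  qed
  have l2: "(\<lambda>n. kk (cauchy_F \<mu> (z0 n))) \<longlonglongrightarrow> 1"
  proof (rule lim_from_bound)
    fix n
    have "Im (cauchy_F \<mu> (z0 n)) \<ge> real n + 1" using ImF_ge(1)[OF rpm, of "z0 n"] by (simp add: z0I)
    thus "norm (kk (cauchy_F \<mu> (z0 n)) - 1) \<le> 2 * exp (- (real n + 1)) / (1 - exp (- 1))"
      by (intro kk_minus1') auto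
  qed
  have eq: "integral\<^sup>L \<mu> (\<lambda>x. kk (z - complex_of_real x)) =
      kk (cauchy_F \<mu> z) - kk (cauchy_F \<mu> (z0 n)) + integral\<^sup>L \<mu> (\<lambda>x. kk (z0 n - complex_of_real x))" for n
    using main_diff[OF L z, of "z0 n"] by (simp add: z0I algebra_simps)
  have "(\<lambda>n. kk (cauchy_F \<mu> z) - kk (cauchy_F \<mu> (z0 n)) + integral\<^sup>L \<mu> (\<lambda>x. kk (z0 n - complex_of_real x)))
      \<longlonglongrightarrow> kk (cauchy_F \<mu> z) - 1 + 1"
    by (intro tendsto_intros l1 l2)
  hence "(\<lambda>n. integral\<^sup>L \<mu> (\<lambda>x. kk (z - complex_of_real x))) \<longlonglongrightarrow> kk (cauchy_F \<mu> z)"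
    unfolding eq[symmetric] by simp
  thus ?thesis by (simp add: LIMSEQ_const_iff)
qed



lemma F_per_int:
  assumes "\<mu> \<in> class_L" "Im z > 0"
  shows "cauchy_F \<mu> (z + 2 * of_real pi * of_int n) = cauchy_F \<mu> z + 2 * of_real pi * of_int n"
proof (cases "n \<ge> 0")
  case True
  then obtain m where "n = int m" using nonneg_int_cases by blast
  thus ?thesis using F_per_nat[OF assms, of m] by simp
next
  case False
  have "- n \<ge> 0" using False by simp
  then obtain m where "- n = int m" using nonneg_int_cases by blast
  hence "n = - int m" by simp
  thus ?thesis using F_per_neg[OF assms, of m] by simp
qed

lemma norm_exp_iz: "norm (exp (\<i> * z)) = exp (- Im z)"
  by (simp add: norm_exp_eq_Re)

lemma psi_eq:
  assumes L: "\<mu> \<in> class_L" and z: "Im z > 0"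
  shows "psi_circ (wrap_W \<mu>) (exp (\<i> * z)) = (kk (cauchy_F \<mu> z) - 1) / 2"
proof -
  have rpm: "real_prob_measure \<mu>" using L by (simp add: class_L_def)
  interpret prob_space \<mu> using rpm by (rule rpm_prob)
  define w where "w = exp (\<i> * z)"
  have m1: "(\<lambda>x. exp (- \<i> * complex_of_real x)) \<in> measurable \<mu> borel"
    by (rule rpm_meas[OF rpm]) measurable
  have m2: "(\<lambda>\<zeta>::complex. w * \<zeta> / (1 - w * \<zeta>)) \<in> borel_measurable borel" by measurable
  have pw: "w * exp (- \<i> * complex_of_real x) / (1 - w * exp (- \<i> * complex_of_real x)) = (kk (z - complex_of_real x) - 1) / 2" for x
  proof -
    define e where "e = exp (\<i> * (z - complex_of_real x))"
    have we: "w * exp (- \<i> * complex_of_real x) = e" unfolding w_def e_def by (simp add: exp_add[symmetric] algebra_simps)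
    have "norm e = exp (- Im z)" unfolding e_def by (simp add: norm_exp_eq_Re)
    also have "\<dots> < 1" using z by simp
    finally have "e \<noteq> 1" by auto
    hence ne: "1 - e \<noteq> 0" by simp
    show ?thesis unfolding we kk_def e_def[symmetric] using ne by (simp add: field_simps)
  qed
  have "psi_circ (wrap_W \<mu>) w = integral\<^sup>L \<mu> (\<lambda>x. w * exp (- \<i> * complex_of_real x) / (1 - w * exp (- \<i> * complex_of_real x)))"
    unfolding psi_circ_def wrap_W_def by (rule integral_distr[OF m1 m2])
  also have "\<dots> = integral\<^sup>L \<mu> (\<lambda>x. (kk (z - complex_of_real x) - 1) / 2)" by (simp only: pw)
  also have "\<dots> = (integral\<^sup>L \<mu> (\<lambda>x. kk (z - complex_of_real x)) - 1) / 2"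
    using kk_integrable[OF rpm z] by (simp add: Bochner_Integration.integral_diff prob_space)
  also have "\<dots> = (kk (cauchy_F \<mu> z) - 1) / 2" by (simp add: main_id[OF L z])
  finally show ?thesis unfolding w_def .
qed

lemma eta_eq:
  assumes L: "\<mu> \<in> class_L" and z: "Im z > 0"
  shows "eta_circ (wrap_W \<mu>) (exp (\<i> * z)) = exp (\<i> * cauchy_F \<mu> z)"
proof -
  have rpm: "real_prob_measure \<mu>" using L by (simp add: class_L_def)
  define q where "q = exp (\<i> * cauchy_F \<mu> z)"
  have "norm q = exp (- Im (cauchy_F \<mu> z))" unfolding q_def by (rule norm_exp_iz)
  also have "\<dots> < 1" using ImF_ge(1)[OF rpm z] z by simp
  finally have "q \<noteq> 1" by auto
  hence ne: "1 - q \<noteq> 0" by simp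
  have hp: "psi_circ (wrap_W \<mu>) (exp (\<i> * z)) = q / (1 - q)"
    unfolding psi_eq[OF L z] kk_def q_def[symmetric] using ne by (simp add: field_simps)
  have "q / (1 - q) / (1 + q / (1 - q)) = q" using ne by (simp add: field_simps)
  thus ?thesis unfolding eta_circ_def hp q_def[symmetric] .
qed

lemma eta_zero: "eta_circ \<nu> 0 = 0"
  by (simp add: eta_circ_def psi_circ_def)

lemma disc_rep:
  assumes "w \<in> ball (0::complex) 1" "w \<noteq> 0"
  shows "\<exists>z. Im z > 0 \<and> exp (\<i> * z) = w"
proof (intro exI conjI)
  show "exp (\<i> * (- \<i> * Ln w)) = w" using assms(2) by simp
  have "norm w < 1" using assms(1) by simp
  hence "ln (norm w) < 0" using assms(2) by simp
  thus "Im (- \<i> * Ln w) > 0" using assms(2) by (simp add: Re_Ln)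
qed



theorem lemma4p18:
  assumes "\<mu> \<in> class_L"
  shows "inj_on (cauchy_F \<mu>) upper_half_plane \<longleftrightarrow> inj_on (eta_circ (wrap_W \<mu>)) (ball 0 1)"
proof
  have rpm: "real_prob_measure \<mu>" using assms by (simp add: class_L_def)
  have Fpos: "Im (cauchy_F \<mu> z) > 0" if "Im z > 0" for z using ImF_ge(1)[OF rpm that] that by linarith
  have etaF: "eta_circ (wrap_W \<mu>) (exp (\<i> * z)) = exp (\<i> * cauchy_F \<mu> z)" if "Im z > 0" for z
    by (rule eta_eq[OF assms that])
  {
    assume inj: "inj_on (cauchy_F \<mu>) upper_half_plane"
    have key: "w1 = w2" if w1: "w1 \<in> ball 0 1" "w1 \<noteq> 0" and w2: "w2 \<in> ball 0 1" "w2 \<noteq> 0"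
      and eq: "eta_circ (wrap_W \<mu>) w1 = eta_circ (wrap_W \<mu>) w2" for w1 w2
    proof -
      obtain z1 where z1: "Im z1 > 0" "exp (\<i> * z1) = w1" using disc_rep[OF w1] by blast
      obtain z2 where z2: "Im z2 > 0" "exp (\<i> * z2) = w2" using disc_rep[OF w2] by blast
      have "exp (\<i> * cauchy_F \<mu> z1) = exp (\<i> * cauchy_F \<mu> z2)"
        using eq etaF[OF z1(1)] etaF[OF z2(1)] z1 z2 by simp
      then obtain n :: int where n: "\<i> * cauchy_F \<mu> z1 = \<i> * cauchy_F \<mu> z2 + (of_int (2 * n) * pi) * \<i>"
        by (auto simp: exp_eq)
      have "cauchy_F \<mu> z1 = cauchy_F \<mu> z2 + 2 * of_real pi * of_int n"
      proof -
        have "\<i> * cauchy_F \<mu> z1 = \<i> * (cauchy_F \<mu> z2 + 2 * of_real pi * of_int n)"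
          using n by (simp add: algebra_simps)
        thus ?thesis by simp
      qed
      also have "\<dots> = cauchy_F \<mu> (z2 + 2 * of_real pi * of_int n)"
        by (rule F_per_int[OF assms z2(1), symmetric])
      finally have "z1 = z2 + 2 * of_real pi * of_int n"
        using inj z1(1) z2(1) by (auto simp: upper_half_plane_def inj_on_def)
      hence "\<i> * z1 = \<i> * z2 + (of_int (2 * n) * pi) * \<i>" by (simp add: algebra_simps)
      hence "exp (\<i> * z1) = exp (\<i> * z2)" by (auto simp: exp_eq)
      thus ?thesis using z1 z2 by simp
    qed
    have nz: "eta_circ (wrap_W \<mu>) w \<noteq> 0" if wb: "w \<in> ball 0 1" "w \<noteq> 0" for w
    proof -
      obtain z where z: "Im z > 0" "exp (\<i> * z) = w" using disc_rep[OF wb] by blast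
      show ?thesis using etaF[OF z(1)] z(2) by simp
    qed
    show "inj_on (eta_circ (wrap_W \<mu>)) (ball 0 1)"
    proof (rule inj_onI)
      fix w1 w2 assume w: "w1 \<in> ball 0 1" "w2 \<in> ball 0 1" "eta_circ (wrap_W \<mu>) w1 = eta_circ (wrap_W \<mu>) w2"
      show "w1 = w2"
      proof (cases "w1 = 0"; cases "w2 = 0")
        assume "w1 \<noteq> 0" "w2 \<noteq> 0" thus ?thesis using key w by blast
      next
        assume "w1 = 0" "w2 \<noteq> 0" thus ?thesis using nz[of w2] w eta_zero by metis
      next
        assume "w1 \<noteq> 0" "w2 = 0" thus ?thesis using nz[of w1] w eta_zero by metis
      qed simp
    qed
  }
  {
    assume inj: "inj_on (eta_circ (wrap_W \<mu>)) (ball 0 1)"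
    show "inj_on (cauchy_F \<mu>) upper_half_plane"
    proof (rule inj_onI)
      fix z1 z2 assume z: "z1 \<in> upper_half_plane" "z2 \<in> upper_half_plane" "cauchy_F \<mu> z1 = cauchy_F \<mu> z2"
      have zI: "Im z1 > 0" "Im z2 > 0" using z by (auto simp: upper_half_plane_def)
      have b: "exp (\<i> * z1) \<in> ball 0 1" "exp (\<i> * z2) \<in> ball 0 1" using zI by (simp_all add: norm_exp_iz)
      have "eta_circ (wrap_W \<mu>) (exp (\<i> * z1)) = eta_circ (wrap_W \<mu>) (exp (\<i> * z2))"
        using etaF[OF zI(1)] etaF[OF zI(2)] z(3) by simp
      hence "exp (\<i> * z1) = exp (\<i> * z2)" using inj b by (auto simp: inj_on_def)
      then obtain n :: int where n: "\<i> * z1 = \<i> * z2 + (of_int (2 * n) * pi) * \<i>"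
        by (auto simp: exp_eq)
      have zz: "z1 = z2 + 2 * of_real pi * of_int n"
      proof -
        have "\<i> * z1 = \<i> * (z2 + 2 * of_real pi * of_int n)" using n by (simp add: algebra_simps)
        thus ?thesis by simp
      qed
      have "cauchy_F \<mu> z2 = cauchy_F \<mu> z2 + 2 * of_real pi * of_int n"
        using z(3) F_per_int[OF assms zI(2), of n] zz by simp
      hence "n = 0" by simp
      thus "z1 = z2" using zz by simp
    qed
  }
qed


end
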